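(* For each $N$, let $\Psi=[\psi_1,\dots,\psi_N]$ be an orthonormal basis of $\mathbb{R}^N$, let $T\subseteq\{1,\dots,N\}$ be a fixed index set with $|T|=K$, and let $w\in\mathbb{R}^N$ have i.i.d. entries with zero mean and zero median, $\mathbb{E}|w_1|=\mu$, $\mathbb{E}[w_1^2]=\sigma^2$, where $\mu,\sigma^2>0$ are constants not depending on $N$. Assume $\|\psi_k\|_1=O(\log N)$ and $\|\psi_k\|_\infty=o(1)$ uniformly over $k\in T$, and $\|w\|_\infty=O(1)$ (the entries are bounded by a constant independent of $N$). Let $\epsilon>0$ and $\Delta_{\mathrm{W}}=\epsilon\left\|\sum_{k\in T}\psi_k\psi_k^Tw\right\|_1$. Then $\lim_{N\to\infty}\Pr\left(\Delta_{\mathrm{W}}\le O(K\,\mathrm{polylog}(N))\right)=1$, i.e. there is a bound of the form $O(K\,\mathrm{polylog}(N))$ that $\Delta_{\mathrm{W}}$ satisfies with probability tending to $1$.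
   Context: Asymptotic notation: $f=O(g)$ if $|f/g|<C$ for some constant $C>0$; $f=o(g)$ if $|f/g|\to0$; $\mathrm{polylog}(N)$ denotes a polynomial in $\log N$. Without defense the corresponding distortion is $\epsilon\|w\|_1=\Theta(N)$. *)

theory Defs
  imports "HOL-Probability.Probability"
begin

text \<open>Vectors in R^N are represented as functions nat => real, indexed by {..<N}.
  Psi k i is the i-th coordinate of the k-th basis vector psi_k.\<close>

definition orthonormal_basis_fun :: "nat \<Rightarrow> (nat \<Rightarrow> nat \<Rightarrow> real) \<Rightarrow> bool" where
  "orthonormal_basis_fun N Psi \<longleftrightarrow>
     (\<forall>j<N. \<forall>k<N. (\<Sum>i<N. Psi j i * Psi k i) = (if j = k then 1 else 0))"

definition Delta_W :: "real \<Rightarrow> nat \<Rightarrow> (nat \<Rightarrow> nat \<Rightarrow> real) \<Rightarrow> nat set \<Rightarrow> (nat \<Rightarrow> real) \<Rightarrow> real" where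
  "Delta_W eps N Psi T w =
     eps * (\<Sum>i<N. \<bar>\<Sum>k\<in>T. Psi k i * (\<Sum>j<N. Psi k j * w j)\<bar>)"

end

theory Submission
  imports Defs
begin

lemma det_bound:
  fixes Psi :: "nat \<Rightarrow> nat \<Rightarrow> real" and w :: "nat \<Rightarrow> real"
  assumes wb: "\<forall>j<N. \<bar>w j\<bar> \<le> B" and B0: "B \<ge> 0"
    and Sb: "\<forall>k\<in>T. (\<Sum>i<N. \<bar>Psi k i\<bar>) \<le> L"
  shows "(\<Sum>i<N. \<bar>\<Sum>k\<in>T. Psi k i * (\<Sum>j<N. Psi k j * w j)\<bar>) \<le> real (card T) * (B * L^2)"
proof (cases "finite T")
  case False
  then show ?thesis by simp
next
  case fin: True
  define c where "c k = (\<Sum>j<N. Psi k j * w j)" for k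
  define S where "S k = (\<Sum>i<N. \<bar>Psi k i\<bar>)" for k
  have S0: "S k \<ge> 0" for k unfolding S_def by (simp add: sum_nonneg)
  have cb: "\<bar>c k\<bar> \<le> B * S k" for k
  proof -
    have "\<bar>c k\<bar> \<le> (\<Sum>j<N. \<bar>Psi k j * w j\<bar>)" unfolding c_def by (rule sum_abs)
    also have "\<dots> \<le> (\<Sum>j<N. \<bar>Psi k j\<bar> * B)"
      by (rule sum_mono) (simp add: abs_mult mult_left_mono wb)
    finally show ?thesis by (simp add: S_def sum_distrib_left mult.commute)
  qed
  have "(\<Sum>i<N. \<bar>\<Sum>k\<in>T. Psi k i * c k\<bar>) \<le> (\<Sum>i<N. \<Sum>k\<in>T. \<bar>Psi k i\<bar> * \<bar>c k\<bar>)"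
    by (rule sum_mono) (metis (no_types, lifting) abs_mult sum.cong sum_abs)
  also have "\<dots> = (\<Sum>k\<in>T. S k * \<bar>c k\<bar>)"
    by (subst sum.swap) (simp add: S_def sum_distrib_right)
  also have "\<dots> \<le> (\<Sum>k\<in>T. B * L^2)"
  proof (rule sum_mono)
    fix k assume k: "k \<in> T"
    have SL: "S k \<le> L" using Sb k by (simp add: S_def)
    have "S k * \<bar>c k\<bar> \<le> S k * (B * S k)" using cb S0 by (simp add: mult_left_mono)
    also have "\<dots> = B * (S k * S k)" by simp
    also have "\<dots> \<le> B * (L * L)" using SL S0[of k] B0 by (intro mult_left_mono mult_mono) auto
    finally show "S k * \<bar>c k\<bar> \<le> B * L^2" by (simp add: power2_eq_square)
  qed
  also have "\<dots> = real (card T) * (B * L^2)" by simp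
  finally show ?thesis by (simp add: c_def)
qed

theorem theorem2:
  fixes Psi :: "nat \<Rightarrow> nat \<Rightarrow> nat \<Rightarrow> real"
    and T :: "nat \<Rightarrow> nat set"
    and D :: "nat \<Rightarrow> real measure"
    and \<mu> \<sigma> \<epsilon> :: real
  assumes onb: "\<And>N. orthonormal_basis_fun N (Psi N)"
    and T_sub: "\<And>N. T N \<subseteq> {..<N}"
    and prob: "\<And>N. prob_space (D N)"
    and distr_borel: "\<And>N. sets (D N) = sets borel"
    and mean_zero: "\<And>N. integrable (D N) (\<lambda>x. x) \<and> (\<integral>x. x \<partial>D N) = 0"
    and median_zero: "\<And>N. measure (D N) {x. x \<le> 0} \<ge> 1/2 \<and> measure (D N) {x. x \<ge> 0} \<ge> 1/2"
    and abs_mean: "\<And>N. (\<integral>x. \<bar>x\<bar> \<partial>D N) = \<mu>"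
    and second_moment: "\<And>N. integrable (D N) (\<lambda>x. x\<^sup>2) \<and> (\<integral>x. x\<^sup>2 \<partial>D N) = \<sigma>\<^sup>2"
    and \<mu>_pos: "\<mu> > 0" and \<sigma>_pos: "\<sigma> > 0"
    and l1_bound: "\<exists>C. \<forall>\<^sub>F N in sequentially. \<forall>k\<in>T N. (\<Sum>i<N. \<bar>Psi N k i\<bar>) \<le> C * ln (real N)"
    and linf_small: "\<And>e. e > 0 \<Longrightarrow> \<forall>\<^sub>F N in sequentially. \<forall>k\<in>T N. \<forall>i<N. \<bar>Psi N k i\<bar> \<le> e"
    and w_bounded: "\<exists>B. \<forall>N. AE x in D N. \<bar>x\<bar> \<le> B"
    and \<epsilon>_pos: "\<epsilon> > 0"
  shows "\<exists>C (a::nat).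
           (\<lambda>N. measure (PiM {..<N} (\<lambda>_. D N))
                   {w \<in> space (PiM {..<N} (\<lambda>_. D N)).
                      Delta_W \<epsilon> N (Psi N) (T N) w \<le> C * real (card (T N)) * (ln (real N)) ^ a})
           \<longlonglongrightarrow> 1"
proof -
  obtain C where C: "\<forall>\<^sub>F N in sequentially. \<forall>k\<in>T N. (\<Sum>i<N. \<bar>Psi N k i\<bar>) \<le> C * ln (real N)"
    using l1_bound by blast
  obtain B0 where B0: "\<And>N. AE x in D N. \<bar>x\<bar> \<le> B0" using w_bounded by blast
  define B where "B = max B0 0"
  have B: "AE x in D N. \<bar>x\<bar> \<le> B" for N using B0[of N] by (auto simp: B_def)
  have Bnn: "B \<ge> 0" by (simp add: B_def)
  show ?thesis
  proof (intro exI[of _ "\<epsilon> * (B * C^2)"] exI[of _ 2] tendsto_eventually)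
    show "\<forall>\<^sub>F N in sequentially. measure (PiM {..<N} (\<lambda>_. D N))
                   {w \<in> space (PiM {..<N} (\<lambda>_. D N)).
                      Delta_W \<epsilon> N (Psi N) (T N) w \<le> \<epsilon> * (B * C^2) * real (card (T N)) * (ln (real N)) ^ 2} = 1"
      using C
    proof eventually_elim
      case (elim N)
      interpret product_prob_space "\<lambda>_. D N" "{..<N}"
        by (metis prob prob_space_imp_sigma_finite product_prob_space.intro
             product_prob_space_axioms.intro product_sigma_finite.intro)
      have ae: "AE w in PiM {..<N} (\<lambda>_. D N). \<forall>j<N. \<bar>w j\<bar> \<le> B"
        proof -
        have "AE w in PiM {..<N} (\<lambda>_. D N). \<forall>j\<in>{..<N}. \<bar>w j\<bar> \<le> B"
          using AE_component[OF _ B] by (subst AE_finite_all) auto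
        then show ?thesis by (rule AE_mp) (auto intro!: AE_I2)
      qed
      have meas: "{w \<in> space (PiM {..<N} (\<lambda>_. D N)).
                      Delta_W \<epsilon> N (Psi N) (T N) w \<le> \<epsilon> * (B * C^2) * real (card (T N)) * (ln (real N)) ^ 2}
              \<in> sets (PiM {..<N} (\<lambda>_. D N))"
      proof -
        have comp[measurable]: "(\<lambda>x. x j) \<in> borel_measurable (PiM {..<N} (\<lambda>_. D N))" if "j < N" for j
          using measurable_component_singleton[of j "{..<N}" "\<lambda>_. D N"] that
          by (simp add: measurable_cong_sets[OF refl distr_borel])
        show ?thesis unfolding Delta_W_def
          by measurable
      qed
      have "AE w in PiM {..<N} (\<lambda>_. D N).
              Delta_W \<epsilon> N (Psi N) (T N) w \<le> \<epsilon> * (B * C^2) * real (card (T N)) * (ln (real N)) ^ 2"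
        using ae
      proof eventually_elim
        case (elim w)
        have "(\<Sum>i<N. \<bar>\<Sum>k\<in>T N. Psi N k i * (\<Sum>j<N. Psi N k j * w j)\<bar>)
              \<le> real (card (T N)) * (B * (C * ln (real N))^2)"
          by (rule det_bound) (use elim \<open>\<forall>k\<in>T N. _\<close> Bnn in auto)
        then show ?case unfolding Delta_W_def using \<epsilon>_pos
          by (simp add: power_mult_distrib mult_left_mono mult_ac)
      qed
      then show ?case using prob_Collect_eq_1[OF meas] by simp
    qed
  qed
qed

end
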